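(* Let $\alpha\in\mathbb R$ and consider the system $$\frac{d}{dt}v_n=-n^2v_n+\alpha v_n-2v_n\|v\|_H^2+v_n|v_n|^2,\quad n\in\mathbb Z,$$ for $v=\sum_nv_ne_n\in H$. The set $\mathcal R$ of its equilibria consists of $v=0$ and of those $v\ne0$ whose nonzero components satisfy the following: with $N_0:=\#\{n:v_n\ne0\}$ and $N_2:=\sum_{n:v_n\ne0}n^2$, $$\|v\|_H^2=\frac{N_0}{2N_0-1}\alpha-\frac{N_2}{2N_0-1}>0,\qquad |v_n|^2=n^2+\frac{\alpha-2N_2}{2N_0-1}>0\ \text{ for } v_n\ne0;$$ and every sequence $(v_n)$ satisfying these conditions gives an equilibrium. Moreover, a nonzero equilibrium $v$ is not hyperbolic if and only if $k^2+\frac{\alpha-2N_2}{2N_0-1}=0$ for some $k$ with $v_k=0$. The zero equilibrium is hyperbolic if and only if $\alpha\ne k^2$ for all $k\in\mathbb Z$. In particular, all equilibria are hyperbolic if $\alpha\notin\mathbb Z$.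
   Context: $e_n=e^{inx}$, $H=L^2_{per}(-\pi,\pi)$ complex-valued with $\|v\|_H^2=\sum|v_n|^2$. The system is invariant under $v_n\mapsto e^{i\phi_n}v_n$ ($\phi_n\in\mathbb R$), so each equilibrium generates a torus of equilibria and can be rotated to a real equilibrium (all $v_n\in\mathbb R$); the real subspace $\{v_n\in\mathbb R\ \forall n\}$ is invariant. Hyperbolicity of an equilibrium $v$ (normal hyperbolicity of its torus) is understood via the real system: for a real equilibrium $v$, the linearization on real perturbations $\theta$ is $\frac d{dt}\theta_n=-n^2\theta_n+\alpha\theta_n-2\theta_n\|v\|_H^2-4v_n(v,\theta)+3\theta_nv_n^2$, and $v$ is hyperbolic iff this linear operator has no zero eigenvalue (nontrivial kernel). *)

theory Defs
  imports "HOL-Analysis.Analysis"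
begin

text \<open>Elements of H = L^2_per(-pi,pi) are represented by their Fourier
  coefficient sequences v :: int => complex, with square-summable moduli.\<close>

definition inH :: "(int \<Rightarrow> 'a::real_normed_vector) \<Rightarrow> bool" where
  "inH v \<longleftrightarrow> (\<lambda>n. (norm (v n))\<^sup>2) summable_on UNIV"

definition normH2 :: "(int \<Rightarrow> 'a::real_normed_vector) \<Rightarrow> real" where
  "normH2 v = (\<Sum>\<^sub>\<infinity>n. (norm (v n))\<^sup>2)"

definition equilibrium :: "real \<Rightarrow> (int \<Rightarrow> complex) \<Rightarrow> bool" where
  "equilibrium \<alpha> v \<longleftrightarrow> inH v \<and>
     (\<forall>n. - (of_int n)\<^sup>2 * v n + of_real \<alpha> * v n - 2 * v n * of_real (normH2 v)
           + v n * of_real ((cmod (v n))\<^sup>2) = 0)"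

definition supp :: "(int \<Rightarrow> complex) \<Rightarrow> int set" where
  "supp v = {n. v n \<noteq> 0}"

definition N0 :: "(int \<Rightarrow> complex) \<Rightarrow> real" where
  "N0 v = real (card (supp v))"

definition N2 :: "(int \<Rightarrow> complex) \<Rightarrow> real" where
  "N2 v = (\<Sum>n\<in>supp v. (real_of_int n)\<^sup>2)"

definition lin_op :: "real \<Rightarrow> (int \<Rightarrow> real) \<Rightarrow> (int \<Rightarrow> real) \<Rightarrow> int \<Rightarrow> real" where
  "lin_op \<alpha> w \<theta> n = - (of_int n)\<^sup>2 * \<theta> n + \<alpha> * \<theta> n - 2 * \<theta> n * normH2 w
      - 4 * w n * (\<Sum>\<^sub>\<infinity>m. w m * \<theta> m) + 3 * \<theta> n * (w n)\<^sup>2"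

definition real_hyperbolic :: "real \<Rightarrow> (int \<Rightarrow> real) \<Rightarrow> bool" where
  "real_hyperbolic \<alpha> w \<longleftrightarrow>
     \<not> (\<exists>\<theta>. inH \<theta> \<and> \<theta> \<noteq> (\<lambda>_. 0) \<and> (\<forall>n. lin_op \<alpha> w \<theta> n = 0))"

text \<open>A (complex) equilibrium is hyperbolic iff the real equilibria on its torus
  (obtained by rotations v_n -> e^{i phi_n} v_n) are hyperbolic.\<close>
definition hyperbolic :: "real \<Rightarrow> (int \<Rightarrow> complex) \<Rightarrow> bool" where
  "hyperbolic \<alpha> v \<longleftrightarrow>
     (\<forall>w::int \<Rightarrow> real. (\<exists>\<phi>::int \<Rightarrow> real. \<forall>n. v n = cis (\<phi> n) * of_real (w n))
        \<longrightarrow> real_hyperbolic \<alpha> w)"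

end

theory Submission
  imports Defs
begin

lemma infsum_fin:
  fixes f :: "int \<Rightarrow> real"
  assumes "finite F" "\<And>n. n \<notin> F \<Longrightarrow> f n = 0"
  shows "infsum f UNIV = sum f F" "f summable_on UNIV"
proof -
  have "infsum f UNIV = infsum f F"
    by (rule infsum_cong_neutral) (use assms in auto)
  then show "infsum f UNIV = sum f F" using assms by simp
  have "f summable_on UNIV \<longleftrightarrow> f summable_on F"
    by (rule summable_on_cong_neutral) (use assms in auto)
  then show "f summable_on UNIV" using assms by simp
qed

lemma eqn:
  "(- (of_int n)\<^sup>2 * z + of_real \<alpha> * z - 2 * z * of_real S + z * of_real ((cmod z)\<^sup>2) = (0::complex))
   \<longleftrightarrow> (z = 0 \<or> (cmod z)\<^sup>2 = (real_of_int n)\<^sup>2 - \<alpha> + 2 * S)"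
proof -
  have "- (of_int n)\<^sup>2 * z + of_real \<alpha> * z - 2 * z * of_real S + z * of_real ((cmod z)\<^sup>2)
     = z * of_real (- (real_of_int n)\<^sup>2 + \<alpha> - 2 * S + (cmod z)\<^sup>2)"
    by (simp add: algebra_simps)
  then have "(- (of_int n)\<^sup>2 * z + of_real \<alpha> * z - 2 * z * of_real S + z * of_real ((cmod z)\<^sup>2) = (0::complex))
     \<longleftrightarrow> z = 0 \<or> - (real_of_int n)\<^sup>2 + \<alpha> - 2 * S + (cmod z)\<^sup>2 = 0"
    by (simp only: mult_eq_0_iff of_real_eq_0_iff)
  then show ?thesis by linarith
qed

lemma equilibrium_iff:
  "equilibrium \<alpha> v \<longleftrightarrow> inH v \<and> (\<forall>n. v n \<noteq> 0 \<longrightarrow> (cmod (v n))\<^sup>2 = (real_of_int n)\<^sup>2 - \<alpha> + 2 * normH2 v)"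
  unfolding equilibrium_def eqn by auto

lemma int_abs_le_sq: "\<bar>real_of_int n\<bar> \<le> (real_of_int n)\<^sup>2"
proof -
  have "\<bar>n\<bar> \<le> n\<^sup>2"
  proof (cases "n = 0")
    case False
    then have "\<bar>n\<bar> * 1 \<le> \<bar>n\<bar> * \<bar>n\<bar>" by (intro mult_left_mono) auto
    then show ?thesis by (simp add: power2_eq_square abs_mult[symmetric])
  qed auto
  then show ?thesis by (metis of_int_abs of_int_le_iff of_int_power)
qed

lemma equilibrium_finite:
  assumes "equilibrium \<alpha> v"
  shows "finite (supp v)"
proof -
  let ?S = "normH2 v"
  have inh: "(\<lambda>n. (cmod (v n))\<^sup>2) summable_on UNIV" using assms by (simp add: equilibrium_def inH_def)
  have "supp v \<subseteq> {-\<lceil>\<alpha> - ?S\<rceil>..\<lceil>\<alpha> - ?S\<rceil>}"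
  proof
    fix n assume "n \<in> supp v"
    then have vn: "v n \<noteq> 0" by (simp add: supp_def)
    have "infsum (\<lambda>n. (cmod (v n))\<^sup>2) {n} \<le> infsum (\<lambda>n. (cmod (v n))\<^sup>2) UNIV"
      by (rule infsum_mono2) (use inh in auto)
    then have le: "(cmod (v n))\<^sup>2 \<le> ?S" by (simp add: normH2_def)
    have "(cmod (v n))\<^sup>2 = (real_of_int n)\<^sup>2 - \<alpha> + 2 * ?S"
      using assms vn by (simp add: equilibrium_iff)
    moreover have "?S \<ge> 0" unfolding normH2_def by (rule infsum_nonneg) auto
    ultimately have "\<bar>real_of_int n\<bar> \<le> \<alpha> - ?S" using le int_abs_le_sq[of n] by linarith
    then have "\<bar>n\<bar> \<le> \<lceil>\<alpha> - ?S\<rceil>" by linarith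
    then show "n \<in> {-\<lceil>\<alpha> - ?S\<rceil>..\<lceil>\<alpha> - ?S\<rceil>}" by auto
  qed
  then show ?thesis using finite_subset by blast
qed

lemma normH2_fin:
  assumes "finite (supp v)"
  shows "normH2 v = (\<Sum>n\<in>supp v. (cmod (v n))\<^sup>2)" "inH v"
  using infsum_fin[OF assms, of "\<lambda>n. (cmod (v n))\<^sup>2"] unfolding normH2_def inH_def
  by (auto simp: supp_def)

lemma supp_ne: "v \<noteq> (\<lambda>_. 0) \<Longrightarrow> supp v \<noteq> {}"
  by (auto simp: supp_def)

lemma N0_ge1: "finite (supp v) \<Longrightarrow> v \<noteq> (\<lambda>_. 0) \<Longrightarrow> N0 v \<ge> 1"
  using supp_ne[of v] by (simp add: N0_def Suc_le_eq card_gt_0_iff)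

lemma alg:
  assumes "(d::real) > 0" "S = a / d * \<alpha> - b / d" "d = 2 * a - 1"
  shows "x - \<alpha> + 2 * S = x + (\<alpha> - 2 * b) / d"
proof -
  have h1: "S * d = a * \<alpha> - b" using assms(1,2) by (simp add: field_simps)
  have h2: "(2 * S - \<alpha>) * d = \<alpha> - 2 * b"
  proof -
    have "(2 * S - \<alpha>) * d = 2 * (S * d) - \<alpha> * d" by (simp add: algebra_simps)
    also have "\<dots> = 2 * (a * \<alpha> - b) - \<alpha> * (2 * a - 1)" by (subst h1) (simp only: assms(3))
    also have "\<dots> = \<alpha> - 2 * b" by (simp add: algebra_simps)
    finally show ?thesis .
  qed
  have "(\<alpha> - 2 * b) / d = 2 * S - \<alpha>" using h2 assms(1) by (simp add: divide_eq_eq)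
  then show ?thesis by simp
qed

lemma part1_fwd:
  assumes eq: "equilibrium \<alpha> v" and nz: "v \<noteq> (\<lambda>_. 0)"
  shows "normH2 v = N0 v / (2 * N0 v - 1) * \<alpha> - N2 v / (2 * N0 v - 1)"
    "N0 v / (2 * N0 v - 1) * \<alpha> - N2 v / (2 * N0 v - 1) > 0"
proof -
  have fin: "finite (supp v)" by (rule equilibrium_finite[OF eq])
  let ?S = "normH2 v"
  have d: "2 * N0 v - 1 > 0" using N0_ge1[OF fin nz] by linarith
  have "?S = (\<Sum>n\<in>supp v. (cmod (v n))\<^sup>2)" by (rule normH2_fin[OF fin])
  also have "\<dots> = (\<Sum>n\<in>supp v. (real_of_int n)\<^sup>2 - \<alpha> + 2 * ?S)"
    using eq by (intro sum.cong) (auto simp: equilibrium_iff supp_def)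
  also have "\<dots> = N2 v - N0 v * \<alpha> + 2 * N0 v * ?S"
    by (simp add: sum.distrib sum_subtractf N2_def N0_def)
  finally have "?S = N2 v - N0 v * \<alpha> + 2 * N0 v * ?S" .
  then have "?S * (2 * N0 v - 1) = N0 v * \<alpha> - N2 v" by (simp add: algebra_simps)
  then have "?S = (N0 v * \<alpha> - N2 v) / (2 * N0 v - 1)" using d by (simp add: eq_divide_eq)
  then show S: "?S = N0 v / (2 * N0 v - 1) * \<alpha> - N2 v / (2 * N0 v - 1)"
    by (simp add: diff_divide_distrib)
  have "?S > 0"
    unfolding normH2_fin(1)[OF fin]
    by (rule sum_pos) (use fin supp_ne[OF nz] in \<open>auto simp: supp_def\<close>)
  then show "N0 v / (2 * N0 v - 1) * \<alpha> - N2 v / (2 * N0 v - 1) > 0" using S by simp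
qed

lemma part1:
  "equilibrium \<alpha> v \<longleftrightarrow>
        (v = (\<lambda>_. 0) \<or>
         (v \<noteq> (\<lambda>_. 0) \<and> finite (supp v) \<and>
          normH2 v = N0 v / (2 * N0 v - 1) * \<alpha> - N2 v / (2 * N0 v - 1) \<and>
          N0 v / (2 * N0 v - 1) * \<alpha> - N2 v / (2 * N0 v - 1) > 0 \<and>
          (\<forall>n. v n \<noteq> 0 \<longrightarrow>
             (cmod (v n))\<^sup>2 = (real_of_int n)\<^sup>2 + (\<alpha> - 2 * N2 v) / (2 * N0 v - 1) \<and>
             (real_of_int n)\<^sup>2 + (\<alpha> - 2 * N2 v) / (2 * N0 v - 1) > 0)))" (is "_ \<longleftrightarrow> ?rhs")
proof (cases "v = (\<lambda>_. 0)")
  case True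
  then show ?thesis by (simp add: equilibrium_def inH_def)
next
  case nz: False
  show ?thesis
  proof
    assume eq: "equilibrium \<alpha> v"
    have fin: "finite (supp v)" by (rule equilibrium_finite[OF eq])
    have d: "2 * N0 v - 1 > 0" using N0_ge1[OF fin nz] by linarith
    note S = part1_fwd[OF eq nz]
    have "(cmod (v n))\<^sup>2 = (real_of_int n)\<^sup>2 + (\<alpha> - 2 * N2 v) / (2 * N0 v - 1) \<and>
             (real_of_int n)\<^sup>2 + (\<alpha> - 2 * N2 v) / (2 * N0 v - 1) > 0" if "v n \<noteq> 0" for n
    proof -
      have "(cmod (v n))\<^sup>2 = (real_of_int n)\<^sup>2 - \<alpha> + 2 * normH2 v"
        using eq that by (simp add: equilibrium_iff)
      also have "\<dots> = (real_of_int n)\<^sup>2 + (\<alpha> - 2 * N2 v) / (2 * N0 v - 1)"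
        by (rule alg[OF d S(1)]) simp
      finally have "(cmod (v n))\<^sup>2 = (real_of_int n)\<^sup>2 + (\<alpha> - 2 * N2 v) / (2 * N0 v - 1)" .
      moreover have "(cmod (v n))\<^sup>2 > 0" using that by simp
      ultimately show ?thesis by simp
    qed
    then show "?rhs" using nz fin S by blast
  next
    assume r: "?rhs"
    then have fin: "finite (supp v)" and S: "normH2 v = N0 v / (2 * N0 v - 1) * \<alpha> - N2 v / (2 * N0 v - 1)"
      using nz by auto
    have d: "2 * N0 v - 1 > 0" using N0_ge1[OF fin nz] by linarith
    show "equilibrium \<alpha> v"
      unfolding equilibrium_iff
    proof (intro conjI allI impI)
      show "inH v" by (rule normH2_fin(2)[OF fin])
      fix n assume "v n \<noteq> 0"
      then have "(cmod (v n))\<^sup>2 = (real_of_int n)\<^sup>2 + (\<alpha> - 2 * N2 v) / (2 * N0 v - 1)"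
        using r nz by auto
      also have "\<dots> = (real_of_int n)\<^sup>2 - \<alpha> + 2 * normH2 v"
        by (rule alg[OF d S, symmetric]) simp
      finally show "(cmod (v n))\<^sup>2 = (real_of_int n)\<^sup>2 - \<alpha> + 2 * normH2 v" .
    qed
  qed
qed

lemma core:
  fixes w :: "int \<Rightarrow> real"
  assumes fin: "finite {n. w n \<noteq> 0}" and ne: "{n. w n \<noteq> 0} \<noteq> {}"
    and eqw: "\<And>n. w n \<noteq> 0 \<Longrightarrow> (w n)\<^sup>2 = (real_of_int n)\<^sup>2 - \<alpha> + 2 * normH2 w"
  shows "real_hyperbolic \<alpha> w \<longleftrightarrow> \<not> (\<exists>k. w k = 0 \<and> (real_of_int k)\<^sup>2 - \<alpha> + 2 * normH2 w = 0)"
proof -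
  let ?S = "normH2 w"
  let ?F = "{n. w n \<noteq> 0}"
  have "(\<exists>k. w k = 0 \<and> (real_of_int k)\<^sup>2 - \<alpha> + 2 * ?S = 0)"
    if th: "inH \<theta>" "\<theta> \<noteq> (\<lambda>_. 0)" "\<forall>n. lin_op \<alpha> w \<theta> n = 0" for \<theta>
  proof -
    define P where "P = (\<Sum>\<^sub>\<infinity>m. w m * \<theta> m)"
    have P: "P = (\<Sum>m\<in>?F. w m * \<theta> m)"
      unfolding P_def by (rule infsum_fin(1)[OF fin]) auto
    have wt: "w n * \<theta> n = 2 * P" if "w n \<noteq> 0" for n
    proof -
      have "0 = lin_op \<alpha> w \<theta> n" using th by simp
      also have "\<dots> = \<theta> n * (- ((real_of_int n)\<^sup>2 - \<alpha> + 2 * ?S)) - 4 * w n * P + 3 * \<theta> n * (w n)\<^sup>2"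
        by (simp add: lin_op_def P_def algebra_simps)
      also have "\<dots> = w n * (2 * (w n * \<theta> n) - 4 * P)"
        by (simp only: eqw[OF that, symmetric]) (simp add: algebra_simps power2_eq_square)
      finally show ?thesis using that by (simp add: mult.commute)
    qed
    have "(\<Sum>m\<in>?F. w m * \<theta> m) = (\<Sum>m\<in>?F. 2 * P)" by (rule sum.cong) (auto simp: wt)
    then have "P = (\<Sum>m\<in>?F. 2 * P)" using P by simp
    also have "\<dots> = 2 * real (card ?F) * P" by simp
    finally have e: "P = 2 * real (card ?F) * P" .
    have "P * (2 * real (card ?F) - 1) = 2 * real (card ?F) * P - P" by (simp add: algebra_simps)
    then have "P * (2 * real (card ?F) - 1) = 0" using e by linarith
    moreover have "card ?F \<ge> 1" using fin ne by (simp add: Suc_le_eq card_gt_0_iff)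
    ultimately have P0: "P = 0" by simp
    obtain k where k: "\<theta> k \<noteq> 0" using th(2) by auto
    have wk: "w k = 0" using wt[of k] P0 k by auto
    have "0 = lin_op \<alpha> w \<theta> k" using th by simp
    also have "\<dots> = - \<theta> k * ((real_of_int k)\<^sup>2 - \<alpha> + 2 * ?S)"
      by (simp add: lin_op_def wk algebra_simps)
    finally have "(real_of_int k)\<^sup>2 - \<alpha> + 2 * ?S = 0" using k by simp
    then show ?thesis using wk by blast
  qed
  moreover have "\<exists>\<theta>. inH \<theta> \<and> \<theta> \<noteq> (\<lambda>_. 0) \<and> (\<forall>n. lin_op \<alpha> w \<theta> n = 0)"
    if "w k = 0" "(real_of_int k)\<^sup>2 - \<alpha> + 2 * ?S = 0" for k
  proof (intro exI conjI allI)
    let ?t = "\<lambda>n. if n = k then 1 else (0::real)"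
    show "inH ?t" unfolding inH_def
      by (rule infsum_fin(2)[of "{k}"]) auto
    show "?t \<noteq> (\<lambda>_. 0)" by (metis one_neq_zero)
    have z: "(\<Sum>\<^sub>\<infinity>m. w m * ?t m) = 0" using that(1)
      by (simp add: if_distrib cong: if_cong)
    fix n show "lin_op \<alpha> w ?t n = 0"
      using that by (auto simp: lin_op_def z algebra_simps)
  qed
  ultimately show ?thesis unfolding real_hyperbolic_def by blast
qed

lemma hyp_nz:
  assumes eq: "equilibrium \<alpha> v" and nz: "v \<noteq> (\<lambda>_. 0)"
  shows "hyperbolic \<alpha> v \<longleftrightarrow> \<not> (\<exists>k. v k = 0 \<and> (real_of_int k)\<^sup>2 - \<alpha> + 2 * normH2 v = 0)"
proof -
  have fin: "finite (supp v)" by (rule equilibrium_finite[OF eq])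
  have rep: "real_hyperbolic \<alpha> w \<longleftrightarrow> \<not> (\<exists>k. v k = 0 \<and> (real_of_int k)\<^sup>2 - \<alpha> + 2 * normH2 v = 0)"
    if r: "\<forall>n. v n = cis (\<phi> n) * of_real (w n)" for w \<phi>
  proof -
    have a: "cmod (v n) = \<bar>w n\<bar>" for n using r by (simp add: norm_mult)
    have z: "w n = 0 \<longleftrightarrow> v n = 0" for n using a[of n] by auto
    have "(\<lambda>n. (norm (w n))\<^sup>2) = (\<lambda>n. (cmod (v n))\<^sup>2)" using a by auto
    then have S: "normH2 w = normH2 v" by (simp add: normH2_def)
    have F: "{n. w n \<noteq> 0} = supp v" using z by (auto simp: supp_def)
    have "real_hyperbolic \<alpha> w \<longleftrightarrow> \<not> (\<exists>k. w k = 0 \<and> (real_of_int k)\<^sup>2 - \<alpha> + 2 * normH2 w = 0)"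
    proof (rule core)
      show "finite {n. w n \<noteq> 0}" using F fin by simp
      show "{n. w n \<noteq> 0} \<noteq> {}" using F supp_ne[OF nz] by simp
      fix n assume "w n \<noteq> 0"
      then have "v n \<noteq> 0" using z by simp
      then have "(cmod (v n))\<^sup>2 = (real_of_int n)\<^sup>2 - \<alpha> + 2 * normH2 v"
        using eq by (simp add: equilibrium_iff)
      then show "(w n)\<^sup>2 = (real_of_int n)\<^sup>2 - \<alpha> + 2 * normH2 w"
        using a[of n] S by simp
    qed
    then show ?thesis using S z by simp
  qed
  have ex: "\<forall>n. v n = cis (Arg (v n)) * of_real (cmod (v n))"
    using rcis_cmod_Arg by (metis mult.commute rcis_def)
  show ?thesis unfolding hyperbolic_def
  proof
    assume "\<forall>w. (\<exists>\<phi>. \<forall>n. v n = cis (\<phi> n) * complex_of_real (w n)) \<longrightarrow> real_hyperbolic \<alpha> w"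
    moreover have "\<exists>\<phi>. \<forall>n. v n = cis (\<phi> n) * complex_of_real (cmod (v n))"
      by (rule exI[where x="\<lambda>n. Arg (v n)"], rule ex)
    ultimately have "real_hyperbolic \<alpha> (\<lambda>n. cmod (v n))"
      by (rule mp[OF spec[where x="\<lambda>n. cmod (v n)"]])
    then show "\<not> (\<exists>k. v k = 0 \<and> (real_of_int k)\<^sup>2 - \<alpha> + 2 * normH2 v = 0)" using rep[OF ex] by simp
  next
    assume "\<not> (\<exists>k. v k = 0 \<and> (real_of_int k)\<^sup>2 - \<alpha> + 2 * normH2 v = 0)"
    then show "\<forall>w. (\<exists>\<phi>. \<forall>n. v n = cis (\<phi> n) * complex_of_real (w n)) \<longrightarrow> real_hyperbolic \<alpha> w"
      using rep by blast
  qed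
qed

lemma hyp0: "hyperbolic \<alpha> (\<lambda>_. 0) \<longleftrightarrow> (\<forall>k::int. \<alpha> \<noteq> (real_of_int k)\<^sup>2)"
proof -
  have w0: "(\<forall>n. (0::complex) = cis (\<phi> n) * of_real (w n)) \<longleftrightarrow> w = (\<lambda>_. 0)" for w \<phi>
    by (auto simp: fun_eq_iff)
  have "hyperbolic \<alpha> (\<lambda>_. 0) \<longleftrightarrow> real_hyperbolic \<alpha> (\<lambda>_. 0)"
    unfolding hyperbolic_def w0 by auto
  also have "\<dots> \<longleftrightarrow> (\<forall>k::int. \<alpha> \<noteq> (real_of_int k)\<^sup>2)"
  proof -
    have N: "normH2 (\<lambda>_::int. 0::real) = 0" by (simp add: normH2_def)
    have L: "lin_op \<alpha> (\<lambda>_. 0) \<theta> n = (\<alpha> - (real_of_int n)\<^sup>2) * \<theta> n" for \<theta> n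
      by (simp add: lin_op_def N algebra_simps)
    have "(\<exists>\<theta>. inH \<theta> \<and> \<theta> \<noteq> (\<lambda>_. 0) \<and> (\<forall>n. lin_op \<alpha> (\<lambda>_. 0) \<theta> n = 0))
          \<longleftrightarrow> (\<exists>k::int. \<alpha> = (real_of_int k)\<^sup>2)"
    proof
      assume "\<exists>\<theta>. inH \<theta> \<and> \<theta> \<noteq> (\<lambda>_. 0) \<and> (\<forall>n. lin_op \<alpha> (\<lambda>_. 0) \<theta> n = 0)"
      then obtain \<theta> where t: "\<theta> \<noteq> (\<lambda>_. 0)" "\<forall>n. lin_op \<alpha> (\<lambda>_. 0) \<theta> n = 0" by blast
      then obtain k where "\<theta> k \<noteq> 0" by auto
      with t have "\<theta> k \<noteq> 0" "lin_op \<alpha> (\<lambda>_. 0) \<theta> k = 0" by auto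
      then show "\<exists>k::int. \<alpha> = (real_of_int k)\<^sup>2" unfolding L by auto
    next
      assume "\<exists>k::int. \<alpha> = (real_of_int k)\<^sup>2"
      then obtain k where k: "\<alpha> = (real_of_int k)\<^sup>2" by auto
      let ?t = "\<lambda>n. if n = k then 1 else (0::real)"
      have "inH ?t" unfolding inH_def by (rule infsum_fin(2)[of "{k}"]) auto
      moreover have "?t \<noteq> (\<lambda>_. 0)" by (metis one_neq_zero)
      moreover have "\<forall>n. lin_op \<alpha> (\<lambda>_. 0) ?t n = 0" unfolding L using k by auto
      ultimately show "\<exists>\<theta>. inH \<theta> \<and> \<theta> \<noteq> (\<lambda>_. 0) \<and> (\<forall>n. lin_op \<alpha> (\<lambda>_. 0) \<theta> n = 0)" by blast
    qed
    then show ?thesis unfolding real_hyperbolic_def by auto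
  qed
  finally show ?thesis .
qed

lemma part2:
  assumes eq: "equilibrium \<alpha> v" and nz: "v \<noteq> (\<lambda>_. 0)"
  shows "\<not> hyperbolic \<alpha> v \<longleftrightarrow>
          (\<exists>k::int. v k = 0 \<and> (real_of_int k)\<^sup>2 + (\<alpha> - 2 * N2 v) / (2 * N0 v - 1) = 0)"
proof -
  have fin: "finite (supp v)" by (rule equilibrium_finite[OF eq])
  have d: "2 * N0 v - 1 > 0" using N0_ge1[OF fin nz] by linarith
  have e: "(real_of_int k)\<^sup>2 - \<alpha> + 2 * normH2 v = (real_of_int k)\<^sup>2 + (\<alpha> - 2 * N2 v) / (2 * N0 v - 1)" for k
    by (rule alg[OF d part1_fwd(1)[OF eq nz]]) simp
  show ?thesis unfolding hyp_nz[OF eq nz] e by simp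
qed

theorem lemma5p1:
  fixes \<alpha> :: real
  shows
   "(\<forall>v. equilibrium \<alpha> v \<longleftrightarrow>
        (v = (\<lambda>_. 0) \<or>
         (v \<noteq> (\<lambda>_. 0) \<and> finite (supp v) \<and>
          normH2 v = N0 v / (2 * N0 v - 1) * \<alpha> - N2 v / (2 * N0 v - 1) \<and>
          N0 v / (2 * N0 v - 1) * \<alpha> - N2 v / (2 * N0 v - 1) > 0 \<and>
          (\<forall>n. v n \<noteq> 0 \<longrightarrow>
             (cmod (v n))\<^sup>2 = (real_of_int n)\<^sup>2 + (\<alpha> - 2 * N2 v) / (2 * N0 v - 1) \<and>
             (real_of_int n)\<^sup>2 + (\<alpha> - 2 * N2 v) / (2 * N0 v - 1) > 0))))
    \<and> (\<forall>v. equilibrium \<alpha> v \<and> v \<noteq> (\<lambda>_. 0) \<longrightarrow>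
        (\<not> hyperbolic \<alpha> v \<longleftrightarrow>
          (\<exists>k::int. v k = 0 \<and> (real_of_int k)\<^sup>2 + (\<alpha> - 2 * N2 v) / (2 * N0 v - 1) = 0)))
    \<and> (hyperbolic \<alpha> (\<lambda>_. 0) \<longleftrightarrow> (\<forall>k::int. \<alpha> \<noteq> (real_of_int k)\<^sup>2))
    \<and> (\<alpha> \<notin> \<int> \<longrightarrow> (\<forall>v. equilibrium \<alpha> v \<longrightarrow> hyperbolic \<alpha> v))"
  apply (intro conjI)
  subgoal by (intro allI part1)
  subgoal using part2 by blast
  subgoal by (rule hyp0)
  subgoal
  proof (intro impI allI)
    fix v assume na: "\<alpha> \<notin> \<int>" and eq: "equilibrium \<alpha> v"
    show "hyperbolic \<alpha> v"
    proof (cases "v = (\<lambda>_. 0)")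
      case True
      have "\<alpha> \<noteq> (real_of_int k)\<^sup>2" for k using na by auto
      then show ?thesis using True hyp0 by simp
    next
      case nz: False
      have fin: "finite (supp v)" by (rule equilibrium_finite[OF eq])
      have d: "2 * N0 v - 1 > 0" using N0_ge1[OF fin nz] by linarith
      show ?thesis
      proof (rule ccontr)
        assume "\<not> hyperbolic \<alpha> v"
        then obtain k where k: "(real_of_int k)\<^sup>2 + (\<alpha> - 2 * N2 v) / (2 * N0 v - 1) = 0"
          using part2[OF eq nz] by blast
        then have "\<alpha> = 2 * N2 v - (real_of_int k)\<^sup>2 * (2 * N0 v - 1)"
          using d by (simp add: field_simps)
        moreover have "N2 v \<in> \<int>" unfolding N2_def by (intro Ints_sum Ints_power Ints_of_int)
        moreover have "N0 v \<in> \<int>" unfolding N0_def by simp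
        ultimately have "\<alpha> \<in> \<int>" by (simp add: Ints_diff Ints_mult Ints_power)
        then show False using na by simp
      qed
    qed
  qed
  done

end
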